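(* Let $G$ be a proper interval graph with no twin vertices, let $\sigma$ be a proper interval ordering of $G$, let each node of the line-incompatibility graph $\widehat{G}$ carry a positive weight, and let $I_{\widehat{G}}$ be a maximum-weight independent set of $\widehat{G}$. Let $x,y,z$ be vertices of $G$ with $x\prec y\prec z$ in $\sigma$. If $xz\in I_{\widehat{G}}$, then $xy\in I_{\widehat{G}}$ or $yz\in I_{\widehat{G}}$.
   Context: All graphs are finite, simple and undirected. Two adjacent vertices $u,v$ are twins if $N[u]=N[v]$. A vertex ordering $\sigma$ of $G$ is a proper interval ordering if for all vertices $x\prec y\prec z$ in $\sigma$, $\{x,z\}\in E(G)$ implies $\{x,y\},\{y,z\}\in E(G)$; a graph is a proper interval graph if and only if it admits a proper interval ordering. The line-incompatibility graph $\widehat{G}$ of $G$ has one node $uv$ for each edge $\{u,v\}$ of $G$, two nodes being adjacent iff the corresponding edges are of the form $\{u,v\},\{v,w\}$ with $\{u,w\}\notin E(G)$. A maximum-weight independent set is an independent set maximizing the total weight of its nodes. *)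

theory Defs
  imports Complex_Main
begin

definition simple_graph :: "'a set \<Rightarrow> 'a set set \<Rightarrow> bool" where
  "simple_graph V E \<longleftrightarrow> finite V \<and> (\<forall>e\<in>E. \<exists>u v. e = {u, v} \<and> u \<noteq> v \<and> u \<in> V \<and> v \<in> V)"

definition closed_nbhd :: "'a set \<Rightarrow> 'a set set \<Rightarrow> 'a \<Rightarrow> 'a set" where
  "closed_nbhd V E u = {v \<in> V. v = u \<or> {u, v} \<in> E}"

definition twins :: "'a set \<Rightarrow> 'a set set \<Rightarrow> 'a \<Rightarrow> 'a \<Rightarrow> bool" where
  "twins V E u v \<longleftrightarrow> {u, v} \<in> E \<and> closed_nbhd V E u = closed_nbhd V E v"

definition no_twins :: "'a set \<Rightarrow> 'a set set \<Rightarrow> bool" where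
  "no_twins V E \<longleftrightarrow> (\<forall>u\<in>V. \<forall>v\<in>V. \<not> twins V E u v)"

definition prec :: "'a list \<Rightarrow> 'a \<Rightarrow> 'a \<Rightarrow> bool" where
  "prec \<sigma> x y \<longleftrightarrow> (\<exists>i j. i < j \<and> j < length \<sigma> \<and> \<sigma> ! i = x \<and> \<sigma> ! j = y)"

definition vertex_ordering :: "'a set \<Rightarrow> 'a list \<Rightarrow> bool" where
  "vertex_ordering V \<sigma> \<longleftrightarrow> distinct \<sigma> \<and> set \<sigma> = V"

definition proper_interval_ordering :: "'a set \<Rightarrow> 'a set set \<Rightarrow> 'a list \<Rightarrow> bool" where
  "proper_interval_ordering V E \<sigma> \<longleftrightarrow> vertex_ordering V \<sigma> \<and>
     (\<forall>x y z. prec \<sigma> x y \<and> prec \<sigma> y z \<and> {x, z} \<in> E \<longrightarrow> {x, y} \<in> E \<and> {y, z} \<in> E)"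

definition proper_interval_graph :: "'a set \<Rightarrow> 'a set set \<Rightarrow> bool" where
  "proper_interval_graph V E \<longleftrightarrow> simple_graph V E \<and> (\<exists>\<sigma>. proper_interval_ordering V E \<sigma>)"

definition lig_adj :: "'a set set \<Rightarrow> 'a set \<Rightarrow> 'a set \<Rightarrow> bool" where
  "lig_adj E e f \<longleftrightarrow> e \<in> E \<and> f \<in> E \<and>
     (\<exists>u v w. e = {u, v} \<and> f = {v, w} \<and> u \<noteq> w \<and> {u, w} \<notin> E)"

definition lig_independent :: "'a set set \<Rightarrow> 'a set set \<Rightarrow> bool" where
  "lig_independent E I \<longleftrightarrow> I \<subseteq> E \<and> (\<forall>e\<in>I. \<forall>f\<in>I. \<not> lig_adj E e f)"

definition lig_max_weight_independent :: "'a set set \<Rightarrow> ('a set \<Rightarrow> real) \<Rightarrow> 'a set set \<Rightarrow> bool" where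
  "lig_max_weight_independent E w I \<longleftrightarrow> lig_independent E I \<and>
     (\<forall>J. lig_independent E J \<longrightarrow> sum w J \<le> sum w I)"

end

theory Submission
  imports Defs
begin

lemma prec_props:
  assumes "distinct s"
  shows "prec s a b \<Longrightarrow> a \<in> set s \<and> b \<in> set s"
    and "prec s a b \<Longrightarrow> prec s b c \<Longrightarrow> prec s a c"
    and "prec s a b \<Longrightarrow> \<not> prec s b a"
    and "a \<in> set s \<Longrightarrow> b \<in> set s \<Longrightarrow> a \<noteq> b \<Longrightarrow> prec s a b \<or> prec s b a"
proof -
  show "prec s a b \<Longrightarrow> a \<in> set s \<and> b \<in> set s"
    unfolding prec_def by auto
  show "prec s a b \<Longrightarrow> prec s b c \<Longrightarrow> prec s a c"
    unfolding prec_def using assms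
    by (metis (no_types, lifting) dual_order.strict_trans nth_eq_iff_index_eq)
  show "prec s a b \<Longrightarrow> \<not> prec s b a"
    unfolding prec_def using assms
    by (metis dual_order.strict_trans nth_eq_iff_index_eq order_less_asym)
  show "a \<in> set s \<Longrightarrow> b \<in> set s \<Longrightarrow> a \<noteq> b \<Longrightarrow> prec s a b \<or> prec s b a"
    unfolding prec_def
    by (metis in_set_conv_nth linorder_neqE_nat)
qed

lemma lig_adj_self: "\<not> lig_adj E e e"
  unfolding lig_adj_def by (auto simp: doubleton_eq_iff)

lemma L1:
  fixes R :: "'a \<Rightarrow> 'a \<Rightarrow> bool"
  assumes inV: "\<And>a b. R a b \<Longrightarrow> a \<in> V \<and> b \<in> V"
    and tr: "\<And>a b c. R a b \<Longrightarrow> R b c \<Longrightarrow> R a c"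
    and asy: "\<And>a b. R a b \<Longrightarrow> \<not> R b a"
    and tot: "\<And>a b. a \<in> V \<Longrightarrow> b \<in> V \<Longrightarrow> a \<noteq> b \<Longrightarrow> R a b \<or> R b a"
    and pio: "\<And>a b c. R a b \<Longrightarrow> R b c \<Longrightarrow> {a,c} \<in> E \<Longrightarrow> {a,b} \<in> E \<and> {b,c} \<in> E"
    and sg: "\<And>e. e \<in> E \<Longrightarrow> \<exists>u v. e = {u,v} \<and> u \<noteq> v \<and> u \<in> V \<and> v \<in> V"
    and xy: "R x y" and yz: "R y z" and xzE: "{x,z} \<in> E"
    and fE: "f \<in> E"
    and n1: "\<not> lig_adj E f {x,z}"
    and adj: "lig_adj E {x,y} f \<or> lig_adj E f {x,y}"
  shows "\<exists>w. f = {y,w} \<and> R z w \<and> {x,w} \<notin> E"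
proof -
  have xyE: "{x,y} \<in> E" and yzE: "{y,z} \<in> E" using pio[OF xy yz xzE] by auto
  have edge: "\<And>a b. {a,b} \<in> E \<Longrightarrow> a \<noteq> b \<and> a \<in> V \<and> b \<in> V"
  proof -
    fix a b assume "{a,b} \<in> E"
    from sg[OF this] obtain u v where "{a,b} = {u,v}" "u \<noteq> v" "u \<in> V" "v \<in> V" by blast
    then show "a \<noteq> b \<and> a \<in> V \<and> b \<in> V" by (auto simp: doubleton_eq_iff)
  qed
  have cases: "(\<exists>w. f = {y,w} \<and> w \<noteq> x \<and> {x,w} \<notin> E) \<or> (\<exists>w. f = {x,w} \<and> w \<noteq> y \<and> {y,w} \<notin> E)"
    using adj unfolding lig_adj_def
    by (auto simp: doubleton_eq_iff insert_commute)
  then show ?thesis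
  proof
    assume "\<exists>w. f = {y,w} \<and> w \<noteq> x \<and> {x,w} \<notin> E"
    then obtain w where f: "f = {y,w}" "w \<noteq> x" "{x,w} \<notin> E" by blast
    have wV: "w \<in> V" "w \<noteq> y" using edge fE f by auto
    have xV: "x \<in> V" "y \<in> V" "z \<in> V" using inV xy yz by auto
    have "\<not> R w x"
    proof
      assume "R w x"
      with pio[OF this xy] fE f show False by (auto simp: insert_commute)
    qed
    hence Rxw: "R x w" using tot[OF xV(1) wV(1)] f by auto
    have "\<not> R w y"
    proof
      assume "R w y"
      with pio[OF Rxw this xyE] f show False by auto
    qed
    hence Ryw: "R y w" using tot[OF xV(2) wV(1)] wV by auto
    have "w \<noteq> z" using f xzE by auto
    moreover have "\<not> R w z"
    proof
      assume "R w z"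
      with pio[OF Rxw this xzE] f show False by auto
    qed
    ultimately have "R z w" using tot[OF xV(3) wV(1)] by auto
    then show ?thesis using f by auto
  next
    assume "\<exists>w. f = {x,w} \<and> w \<noteq> y \<and> {y,w} \<notin> E"
    then obtain w where f: "f = {x,w}" "w \<noteq> y" "{y,w} \<notin> E" by blast
    have wV: "w \<in> V" "w \<noteq> x" using edge fE f by auto
    have xV: "x \<in> V" "y \<in> V" "z \<in> V" using inV xy yz by auto
    have wz: "w \<noteq> z" using f yzE by auto
    have wzE: "{w,z} \<in> E"
    proof (rule ccontr)
      assume "{w,z} \<notin> E"
      hence "lig_adj E f {x,z}" unfolding lig_adj_def using fE xzE f wz
        by (auto simp: insert_commute)
      with n1 show False by simp
    qed
    have "\<not> R y w"
    proof
      assume "R y w"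
      with pio[OF xy this] fE f show False by auto
    qed
    hence Rwy: "R w y" using tot[OF xV(2) wV(1)] f by auto
    from pio[OF Rwy yz wzE] f show ?thesis by (auto simp: insert_commute)
  qed
qed

theorem lemma7:
  fixes V :: "'a set" and E :: "'a set set" and \<sigma> :: "'a list"
    and w :: "'a set \<Rightarrow> real" and I :: "'a set set" and x y z :: 'a
  assumes "proper_interval_graph V E"
    and "no_twins V E"
    and "proper_interval_ordering V E \<sigma>"
    and "\<forall>e\<in>E. w e > 0"
    and "lig_max_weight_independent E w I"
    and "prec \<sigma> x y" and "prec \<sigma> y z"
    and "{x, z} \<in> I"
  shows "{x, y} \<in> I \<or> {y, z} \<in> I"
proof (rule ccontr)
  assume nn: "\<not> ({x, y} \<in> I \<or> {y, z} \<in> I)"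
  define R where "R = prec \<sigma>"
  have dist: "distinct \<sigma>" and setV: "set \<sigma> = V"
    using assms(3) unfolding proper_interval_ordering_def vertex_ordering_def by auto
  have pio: "\<And>a b c. R a b \<Longrightarrow> R b c \<Longrightarrow> {a,c} \<in> E \<Longrightarrow> {a,b} \<in> E \<and> {b,c} \<in> E"
    using assms(3) unfolding proper_interval_ordering_def R_def by blast
  have sg: "\<And>e. e \<in> E \<Longrightarrow> \<exists>u v. e = {u,v} \<and> u \<noteq> v \<and> u \<in> V \<and> v \<in> V"
    and finV: "finite V"
    using assms(1) unfolding proper_interval_graph_def simple_graph_def by auto
  have EPow: "E \<subseteq> Pow V" using sg by blast
  have finE: "finite E" using finite_subset[OF EPow] finV by auto
  have indep: "I \<subseteq> E" "\<And>e f. e \<in> I \<Longrightarrow> f \<in> I \<Longrightarrow> \<not> lig_adj E e f"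
    and maxw: "\<And>J. lig_independent E J \<Longrightarrow> sum w J \<le> sum w I"
    using assms(5) unfolding lig_max_weight_independent_def lig_independent_def by auto
  have finI: "finite I" using finite_subset[OF indep(1) finE] .
  have inV: "\<And>a b. R a b \<Longrightarrow> a \<in> V \<and> b \<in> V"
    and tr: "\<And>a b c. R a b \<Longrightarrow> R b c \<Longrightarrow> R a c"
    and asy: "\<And>a b. R a b \<Longrightarrow> \<not> R b a"
    and tot: "\<And>a b. a \<in> V \<Longrightarrow> b \<in> V \<Longrightarrow> a \<noteq> b \<Longrightarrow> R a b \<or> R b a"
    using prec_props[OF dist] setV unfolding R_def by blast+
  have xy: "R x y" and yz: "R y z" using assms(6,7) R_def by auto
  have xzE: "{x,z} \<in> E" using assms(8) indep(1) by auto
  have xyE: "{x,y} \<in> E" and yzE: "{y,z} \<in> E" using pio[OF xy yz xzE] by auto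
  \<comment> \<open>adding an edge not in I which conflicts with nothing contradicts maximality\<close>
  have conflict: "\<exists>f\<in>I. lig_adj E e f \<or> lig_adj E f e" if eE: "e \<in> E" and eI: "e \<notin> I" for e
  proof (rule ccontr)
    assume "\<not> (\<exists>f\<in>I. lig_adj E e f \<or> lig_adj E f e)"
    hence "lig_independent E (insert e I)"
      unfolding lig_independent_def using indep eE lig_adj_self by blast
    hence "sum w (insert e I) \<le> sum w I" by (rule maxw)
    moreover have "sum w (insert e I) = w e + sum w I" using finI eI by simp
    moreover have "w e > 0" using assms(4) eE by auto
    ultimately show False by simp
  qed
  obtain f where fI: "f \<in> I" and fadj: "lig_adj E {x,y} f \<or> lig_adj E f {x,y}"
    using conflict[OF xyE] nn by blast
  obtain g where gI: "g \<in> I" and gadj: "lig_adj E {z,y} g \<or> lig_adj E g {z,y}"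
    using conflict[OF yzE] nn by (auto simp: insert_commute)
  have fE: "f \<in> E" using fI indep(1) by auto
  have n1: "\<not> lig_adj E f {x,z}" using indep(2)[OF fI assms(8)] .
  have "\<exists>u. f = {y,u} \<and> R z u \<and> {x,u} \<notin> E"
    by (rule L1[OF inV tr asy tot pio sg xy yz xzE fE n1 fadj])
  then obtain u where f: "f = {y,u}" "R z u" "{x,u} \<notin> E" by blast
  have zxE: "{z,x} \<in> E" using xzE by (simp add: insert_commute)
  have inV': "\<And>a b. R b a \<Longrightarrow> a \<in> V \<and> b \<in> V" using inV by blast
  have tr': "\<And>a b c. R b a \<Longrightarrow> R c b \<Longrightarrow> R c a" using tr by blast
  have asy': "\<And>a b. R b a \<Longrightarrow> \<not> R a b" using asy by blast
  have tot': "\<And>a b. a \<in> V \<Longrightarrow> b \<in> V \<Longrightarrow> a \<noteq> b \<Longrightarrow> R b a \<or> R a b" using tot by blast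
  have pio': "\<And>a b c. R b a \<Longrightarrow> R c b \<Longrightarrow> {a, c} \<in> E \<Longrightarrow> {a, b} \<in> E \<and> {b, c} \<in> E"
  proof -
    fix a b c assume h: "R b a" "R c b" "{a, c} \<in> E"
    have "{c,a} \<in> E" using h(3) by (simp add: insert_commute)
    from pio[OF h(2) h(1) this] show "{a, b} \<in> E \<and> {b, c} \<in> E" by (simp add: insert_commute)
  qed
  have gE: "g \<in> E" using gI indep(1) by auto
  have n2: "\<not> lig_adj E g {z,x}" using indep(2)[OF gI assms(8)] by (simp add: insert_commute)
  have "\<exists>v. g = {y,v} \<and> R v x \<and> {z,v} \<notin> E"
    by (rule L1[where R="\<lambda>a b. R b a", OF inV' tr' asy' tot' pio' sg yz xy zxE gE n2 gadj])
  then obtain v where g: "g = {y,v}" "R v x" "{z,v} \<notin> E" by blast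
  have Rvz: "R v z" using tr[OF g(2) tr[OF xy yz]] .
  have Rvu: "R v u" using tr[OF Rvz f(2)] .
  have "{v,u} \<notin> E"
  proof
    assume "{v,u} \<in> E"
    from pio[OF Rvz f(2) this] g(3) show False by (auto simp: insert_commute)
  qed
  moreover have "v \<noteq> u" using Rvu asy by auto
  ultimately have "lig_adj E g f" unfolding lig_adj_def
  proof (intro conjI exI)
    show "g = {v, y}" using g(1) by (simp add: insert_commute)
    show "f = {y, u}" using f(1) .
  qed (use fI gI indep(1) in auto)
  with indep(2)[OF gI fI] show False by simp
qed

end
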